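(* Under the standing setting and the multilevel parametrization assumption described in the context (with parameters $m$ and $\alpha>0$), define for $M\in\mathbb{N}_0$ $$e_M:=\Big\|\sum_{j>M}\mathbf{A}_j\otimes\mathbf{M}_j\Big\|_{\ell^2(\mathcal{S}\times\mathcal{F})\to\ell^2(\mathcal{S}\times\mathcal{F})}.$$ Then there is a constant $C>0$ such that $e_M\le C\,M^{-\alpha/m}$ for all $M\in\mathbb{N}$.
   Context: Setting: $D\subset\mathbb{R}^m$ is a bounded domain, $V=H^1_0(D)$, $\{\psi_\lambda\}_{\lambda\in\mathcal{S}}$ is a Riesz basis of $V$. The parametric coefficient is $a(y)=\bar a+\sum_{j\ge1}y_j\theta_j$, $y\in[-1,1]^{\mathbb{N}}$, and $\langle A_ju,v\rangle=\int_D\theta_j\nabla u\cdot\nabla v\,dx$, $\mathbf{A}_j=(\langle A_j\psi_{\lambda'},\psi_\lambda\rangle)_{\lambda,\lambda'\in\mathcal{S}}$. $\mathcal{F}$ is the set of finitely supported sequences in $\mathbb{N}_0^{\mathbb{N}}$, $L_\nu$ the tensorized Legendre polynomials orthonormal in $L^2(Y,\mu)$ with $\mu$ the uniform probability measure on $Y=[-1,1]^{\mathbb{N}}$, and $\mathbf{M}_j=(\int_Y y_jL_\nu L_{\nu'}\,d\mu)_{\nu,\nu'\in\mathcal{F}}$. Multilevel parametrization assumption: $\{\xi_\mu\}_{\mu\in\Lambda}$ are compactly supported functions on $D$ with levels $|\mu|\in\mathbb{N}_0$, $\operatorname{diam}\operatorname{supp}\xi_\mu\sim2^{-|\mu|}$,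 $\|\xi_\mu\|_{L^\infty(D)}=1$; the number of $\mu$ with $|\mu|\le\ell$ is at most a constant times $2^{m\ell}$, and at each point of $D$ at most a uniformly bounded number of $\xi_\mu$ of any given level are nonzero. $(\mu_j)_{j\ge1}$ enumerates $\Lambda$ with nondecreasing level and $\theta_j=2^{-\alpha|\mu_j|}\xi_{\mu_j}$. *)

theory Defs
  imports "HOL-Analysis.Analysis" "HOL-Probability.Probability"
begin

fun ck_smooth :: "nat \<Rightarrow> ('a::euclidean_space \<Rightarrow> real) \<Rightarrow> bool" where
  "ck_smooth 0 f = continuous_on UNIV f"
| "ck_smooth (Suc k) f = ((\<forall>x. f differentiable (at x)) \<and>
      (\<forall>b. ck_smooth k (\<lambda>x. frechet_derivative f (at x) b)))"

definition cinf_smooth :: "('a::euclidean_space \<Rightarrow> real) \<Rightarrow> bool" where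
  "cinf_smooth f \<longleftrightarrow> (\<forall>k. ck_smooth k f)"

definition test_fun :: "'a::euclidean_space set \<Rightarrow> ('a \<Rightarrow> real) \<Rightarrow> bool" where
  "test_fun D \<phi> \<longleftrightarrow> cinf_smooth \<phi> \<and> compact (closure {x. \<phi> x \<noteq> 0})
      \<and> closure {x. \<phi> x \<noteq> 0} \<subseteq> D"

definition dderiv :: "('a::euclidean_space \<Rightarrow> real) \<Rightarrow> 'a \<Rightarrow> 'a \<Rightarrow> real" where
  "dderiv \<phi> b x = frechet_derivative \<phi> (at x) b"

definition cgrad :: "('a::euclidean_space \<Rightarrow> real) \<Rightarrow> 'a \<Rightarrow> 'a" where
  "cgrad \<phi> x = (\<Sum>b\<in>Basis. dderiv \<phi> b x *\<^sub>R b)"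

definition sq_int :: "'a::euclidean_space set \<Rightarrow> ('a \<Rightarrow> 'b::euclidean_space) \<Rightarrow> bool" where
  "sq_int D f \<longleftrightarrow> set_borel_measurable lebesgue D f
      \<and> set_integrable lebesgue D (\<lambda>x. (norm (f x))\<^sup>2)"

definition is_weak_grad :: "'a::euclidean_space set \<Rightarrow> ('a \<Rightarrow> real) \<Rightarrow> ('a \<Rightarrow> 'a) \<Rightarrow> bool" where
  "is_weak_grad D u g \<longleftrightarrow> sq_int D u \<and> sq_int D g \<and>
     (\<forall>\<phi>. test_fun D \<phi> \<longrightarrow> (\<forall>b\<in>Basis.
        (LINT x:D|lebesgue. u x * dderiv \<phi> b x) = - (LINT x:D|lebesgue. (g x \<bullet> b) * \<phi> x)))"

definition wgrad :: "'a::euclidean_space set \<Rightarrow> ('a \<Rightarrow> real) \<Rightarrow> 'a \<Rightarrow> 'a" where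
  "wgrad D u = (SOME g. is_weak_grad D u g)"

(* H^1_0(D): closure of C_c^\<infinity>(D) in the H^1(D) norm *)
definition H10 :: "'a::euclidean_space set \<Rightarrow> ('a \<Rightarrow> real) set" where
  "H10 D = {u. \<exists>g. is_weak_grad D u g \<and>
      (\<exists>\<phi>::nat \<Rightarrow> 'a \<Rightarrow> real. (\<forall>n. test_fun D (\<phi> n)) \<and>
         (\<lambda>n. (LINT x:D|lebesgue. (u x - \<phi> n x)\<^sup>2 + (norm (g x - cgrad (\<phi> n) x))\<^sup>2))
            \<longlonglongrightarrow> 0)}"

(* squared V-norm (energy norm) of u - \<Sum>_{\<lambda>} c_\<lambda> \<psi>_\<lambda>, c finitely supported *)
definition Vdist2 :: "'a::euclidean_space set \<Rightarrow> ('a \<Rightarrow> real) \<Rightarrow> ('s \<Rightarrow> 'a \<Rightarrow> real)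
     \<Rightarrow> ('s \<Rightarrow> real) \<Rightarrow> real" where
  "Vdist2 D u \<psi> c = (LINT x:D|lebesgue.
      (norm (wgrad D u x - (\<Sum>l\<in>{l. c l \<noteq> 0}. c l *\<^sub>R wgrad D (\<psi> l) x)))\<^sup>2)"

(* Riesz basis of V = H^1_0(D) (normed by \<parallel>\<nabla>u\<parallel>_{L^2}): complete and Riesz-stable *)
definition riesz_basis_H10 :: "'a::euclidean_space set \<Rightarrow> ('s \<Rightarrow> 'a \<Rightarrow> real) \<Rightarrow> bool" where
  "riesz_basis_H10 D \<psi> \<longleftrightarrow> (\<forall>l. \<psi> l \<in> H10 D) \<and>
     (\<forall>u\<in>H10 D. \<forall>\<epsilon>>0. \<exists>c. finite {l. c l \<noteq> 0} \<and> Vdist2 D u \<psi> c < \<epsilon>) \<and>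
     (\<exists>c1 c2. 0 < c1 \<and> 0 < c2 \<and> (\<forall>c. finite {l. c l \<noteq> 0} \<longrightarrow>
        c1 * (\<Sum>l\<in>{l. c l \<noteq> 0}. (c l)\<^sup>2) \<le> Vdist2 D (\<lambda>_. 0) \<psi> c \<and>
        Vdist2 D (\<lambda>_. 0) \<psi> c \<le> c2 * (\<Sum>l\<in>{l. c l \<noteq> 0}. (c l)\<^sup>2)))"

(* (A_j)_{\<lambda>,\<lambda>'} = \<langle>A_j \<psi>_\<lambda>', \<psi>_\<lambda>\<rangle> = \<integral>_D \<theta>_j \<nabla>\<psi>_\<lambda>' \<cdot> \<nabla>\<psi>_\<lambda> *)
definition Amat :: "'a::euclidean_space set \<Rightarrow> ('s \<Rightarrow> 'a \<Rightarrow> real) \<Rightarrow> ('a \<Rightarrow> real) \<Rightarrow> 's \<Rightarrow> 's \<Rightarrow> real" where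
  "Amat D \<psi> \<theta> l l' = (LINT x:D|lebesgue. \<theta> x * (wgrad D (\<psi> l') x \<bullet> wgrad D (\<psi> l) x))"

(* classical Legendre polynomials P_n (Bonnet recursion), P_n(1) = 1 *)
fun legendreP :: "nat \<Rightarrow> real \<Rightarrow> real" where
  "legendreP 0 t = 1"
| "legendreP (Suc 0) t = t"
| "legendreP (Suc (Suc n)) t =
     ((2 * real n + 3) * t * legendreP (Suc n) t - (real n + 1) * legendreP n t) / (real n + 2)"

(* Legendre polynomials orthonormal w.r.t. the uniform probability measure on [-1,1] *)
definition legendreL :: "nat \<Rightarrow> real \<Rightarrow> real" where
  "legendreL n t = sqrt (2 * real n + 1) * legendreP n t"

definition Fidx :: "(nat \<Rightarrow> nat) set" where
  "Fidx = {\<nu>. finite {j. \<nu> j \<noteq> 0}}"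

definition tensL :: "(nat \<Rightarrow> nat) \<Rightarrow> (nat \<Rightarrow> real) \<Rightarrow> real" where
  "tensL \<nu> y = (\<Prod>j\<in>{j. \<nu> j \<noteq> 0}. legendreL (\<nu> j) (y j))"

definition muY :: "(nat \<Rightarrow> real) measure" where
  "muY = PiM UNIV (\<lambda>_. uniform_measure lborel {-1..1})"

definition Mmat :: "nat \<Rightarrow> (nat \<Rightarrow> nat) \<Rightarrow> (nat \<Rightarrow> nat) \<Rightarrow> real" where
  "Mmat j \<nu> \<nu>' = (\<integral>y. y j * tensL \<nu> y * tensL \<nu>' y \<partial>muY)"

definition fin_l2_unit :: "('s \<times> (nat \<Rightarrow> nat) \<Rightarrow> real) \<Rightarrow> bool" where
  "fin_l2_unit v \<longleftrightarrow> finite {p. v p \<noteq> 0} \<and> {p. v p \<noteq> 0} \<subseteq> UNIV \<times> Fidx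
      \<and> (\<Sum>p\<in>{p. v p \<noteq> 0}. (v p)\<^sup>2) \<le> 1"

(* entries of \<Sum>_{j\<ge>M} A_j \<otimes> M_j (j counted from 0) *)
definition tail_entry :: "(nat \<Rightarrow> 's \<Rightarrow> 's \<Rightarrow> real) \<Rightarrow> nat
     \<Rightarrow> 's \<times> (nat \<Rightarrow> nat) \<Rightarrow> 's \<times> (nat \<Rightarrow> nat) \<Rightarrow> real" where
  "tail_entry A M p q = (\<Sum>j. if M \<le> j then A j (fst p) (fst q) * Mmat j (snd p) (snd q) else 0)"

(* e_M as an operator norm: sup of |\<langle>w, B v\<rangle>| over finitely supported unit vectors *)
definition tail_norm :: "(nat \<Rightarrow> 's \<Rightarrow> 's \<Rightarrow> real) \<Rightarrow> nat \<Rightarrow> ereal" where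
  "tail_norm A M = (SUP (v, w) \<in> {(v, w). fin_l2_unit v \<and> fin_l2_unit w}.
      ereal \<bar>\<Sum>p\<in>{p. w p \<noteq> 0}. \<Sum>q\<in>{q. v q \<noteq> 0}. w p * tail_entry A M p q * v q\<bar>)"

definition multilevel ::
  "'a::euclidean_space set \<Rightarrow> 'l set \<Rightarrow> ('l \<Rightarrow> nat) \<Rightarrow> ('l \<Rightarrow> 'a \<Rightarrow> real) \<Rightarrow> (nat \<Rightarrow> 'l) \<Rightarrow> bool" where
  "multilevel D Lam lev \<xi> enum \<longleftrightarrow>
     (\<forall>\<mu>\<in>Lam. \<xi> \<mu> \<in> borel_measurable lebesgue
        \<and> compact (closure {x. \<xi> \<mu> x \<noteq> 0}) \<and> closure {x. \<xi> \<mu> x \<noteq> 0} \<subseteq> D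
        \<and> esssup (restrict_space lebesgue D) (\<lambda>x. ereal \<bar>\<xi> \<mu> x\<bar>) = 1)
   \<and> (\<exists>c1 c2. 0 < c1 \<and> 0 < c2 \<and> (\<forall>\<mu>\<in>Lam.
        c1 * 2 powr (- real (lev \<mu>)) \<le> diameter (closure {x. \<xi> \<mu> x \<noteq> 0}) \<and>
        diameter (closure {x. \<xi> \<mu> x \<noteq> 0}) \<le> c2 * 2 powr (- real (lev \<mu>))))
   \<and> (\<exists>C. \<forall>l. finite {\<mu>\<in>Lam. lev \<mu> \<le> l} \<and>
        real (card {\<mu>\<in>Lam. lev \<mu> \<le> l}) \<le> C * 2 powr (real DIM('a) * real l))
   \<and> (\<exists>K. \<forall>x\<in>D. \<forall>l. finite {\<mu>\<in>Lam. lev \<mu> = l \<and> \<xi> \<mu> x \<noteq> 0} \<and>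
        card {\<mu>\<in>Lam. lev \<mu> = l \<and> \<xi> \<mu> x \<noteq> 0} \<le> K)
   \<and> bij_betw enum UNIV Lam \<and> mono (lev \<circ> enum)"

end

theory Submission
  imports Defs
begin

abbreviation UU :: "real measure" where "UU \<equiv> uniform_measure lborel {-1..(1::real)}"

lemma UU_density: "UU = density lborel (\<lambda>x. ennreal (indicator {-1..1} x / 2))"
proof -
  have h: "(1::ennreal) / 2 = inverse 2" by (simp add: divide_ennreal_def)
  show ?thesis unfolding uniform_measure_def
    by (intro density_cong) (auto split: split_indicator simp: divide_ennreal h)
qed

lemma UU_integrable: "continuous_on UNIV f \<Longrightarrow> integrable UU (f::real\<Rightarrow>real)"
proof -
  assume c: "continuous_on UNIV f"
  have m: "f \<in> borel_measurable lborel" using c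
    by (simp add: borel_measurable_continuous_onI)
  have c': "continuous_on {-1..1} f" using c continuous_on_subset by blast
  show ?thesis unfolding UU_density
    apply (subst integrable_density)
    using m c borel_integrable_atLeastAtMost'[OF c'] 
    by (auto simp: set_integrable_def intro!: integrable_mult_left)
qed

lemma UU_integral: "continuous_on UNIV f \<Longrightarrow> integral\<^sup>L UU (f::real\<Rightarrow>real) = integral\<^sup>L lborel (\<lambda>x. indicator {-1..1} x *\<^sub>R f x) / 2"
proof -
  assume c: "continuous_on UNIV f"
  have m: "f \<in> borel_measurable lborel" using c
    by (simp add: borel_measurable_continuous_onI)
  show ?thesis unfolding UU_density
    apply (subst integral_density)
    using m by (auto simp: mult.commute)
qed

lemma UU_FTC:
  assumes "\<And>x. (F has_real_derivative f x) (at x)" "continuous_on UNIV f"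
  shows "integral\<^sup>L UU f = (F 1 - F (-1)) / 2"
  apply (subst UU_integral[OF assms(2)])
  apply (subst integral_FTC_atLeastAtMost[where F=F])
  using assms by (auto simp: has_real_derivative_iff_has_vector_derivative[symmetric]
     intro: has_field_derivative_at_within continuous_on_subset)

fun dP :: "nat \<Rightarrow> real \<Rightarrow> real" where
  "dP 0 t = 0"
| "dP (Suc 0) t = 1"
| "dP (Suc (Suc n)) t =
     ((2 * real n + 3) * (legendreP (Suc n) t + t * dP (Suc n) t) - (real n + 1) * dP n t) / (real n + 2)"

lemma legendreP_deriv: "(legendreP n has_real_derivative dP n t) (at t)"
  apply (induction n t rule: legendreP.induct)
    apply (auto intro!: derivative_eq_intros)
  apply (simp add: field_simps)
  done

lemma legendreP_cont: "continuous_on UNIV (legendreP n)"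
  using legendreP_deriv DERIV_isCont continuous_at_imp_continuous_on by blast

lemma dP_EF: "t * dP (Suc n) t - dP n t = (real n + 1) * legendreP (Suc n) t \<and>
    dP (Suc n) t - t * dP n t = (real n + 1) * legendreP n t"
proof (induction n)
  case 0 then show ?case by simp
next
  case (Suc n)
  define a where "a = legendreP (Suc n) t"
  define b where "b = legendreP n t"
  define c where "c = dP (Suc n) t"
  define d where "d = dP n t"
  have E: "t * c = d + (real n + 1) * a" and F: "c = t * d + (real n + 1) * b"
    using Suc.IH unfolding a_def b_def c_def d_def by linarith+
  have "dP (Suc (Suc n)) t = ((2 * real n + 3) * (a + t * c) - (real n + 1) * d) / (real n + 2)"
    unfolding a_def c_def d_def by simp
  also have "\<dots> = ((2 * real n + 3) * (a + (d + (real n + 1) * a)) - (real n + 1) * d) / (real n + 2)"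
    unfolding E ..
  also have "\<dots> = (2 * real n + 3) * a + d"
    by (simp add: field_simps)
  finally have D: "dP (Suc (Suc n)) t = (2 * real n + 3) * a + d" .
  have P2: "legendreP (Suc (Suc n)) t = ((2 * real n + 3) * t * a - (real n + 1) * b) / (real n + 2)"
    unfolding a_def b_def by simp
  show ?case
  proof
    have "t * dP (Suc (Suc n)) t - dP (Suc n) t = (2 * real n + 3) * t * a + t * d - c"
      unfolding D c_def by (simp add: algebra_simps)
    also have "\<dots> = (2 * real n + 3) * t * a - (real n + 1) * b" unfolding F by simp
    also have "\<dots> = (real (Suc n) + 1) * legendreP (Suc (Suc n)) t"
      unfolding P2 by (simp add: field_simps)
    finally show "t * dP (Suc (Suc n)) t - dP (Suc n) t = (real (Suc n) + 1) * legendreP (Suc (Suc n)) t" .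
    have "dP (Suc (Suc n)) t - t * dP (Suc n) t = (2 * real n + 3) * a + d - (d + (real n + 1) * a)"
      unfolding D c_def[symmetric] E ..
    also have "\<dots> = (real (Suc n) + 1) * a" by (simp add: algebra_simps)
    finally show "dP (Suc (Suc n)) t - t * dP (Suc n) t = (real (Suc n) + 1) * legendreP (Suc n) t"
      unfolding a_def .
  qed
qed

lemma dP_D: "dP (Suc (Suc n)) t = (2 * real n + 3) * legendreP (Suc n) t + dP n t"
proof -
  have E: "t * dP (Suc n) t = dP n t + (real n + 1) * legendreP (Suc n) t"
    using dP_EF[of t n] by linarith
  have "dP (Suc (Suc n)) t = ((2 * real n + 3) * (legendreP (Suc n) t + t * dP (Suc n) t) - (real n + 1) * dP n t) / (real n + 2)"
    by simp
  also have "\<dots> = (2 * real n + 3) * legendreP (Suc n) t + dP n t"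
    unfolding E by (simp add: field_simps)
  finally show ?thesis .
qed

declare dP.simps(3)[simp del]

lemma legendreP_one: "legendreP n 1 = 1"
  by (induction n "1::real" rule: legendreP.induct) (auto simp: field_simps)

lemma legendreP_mone: "legendreP n (-1) = (-1) ^ n"
  by (induction n "-1::real" rule: legendreP.induct) (auto simp: field_simps)

lemma legendreP_cont'[continuous_intros]:
  "continuous_on S f \<Longrightarrow> continuous_on S (\<lambda>x. legendreP n (f x))"
  using continuous_on_compose2[OF legendreP_cont, of S f] by auto

lemma P_rec: "legendreP (Suc (Suc n)) t =
     ((2 * real n + 3) * t * legendreP (Suc n) t - (real n + 1) * legendreP n t) / (real n + 2)"
  by simp

lemma P_rec': "(real n + 2) * legendreP (Suc (Suc n)) t =
     (2 * real n + 3) * t * legendreP (Suc n) t - (real n + 1) * legendreP n t"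
proof -
  have "real n + 2 \<noteq> 0" by simp
  then show ?thesis unfolding P_rec by simp
qed

declare legendreP.simps(3)[simp del]

lemma lin_add: "integrable M f \<Longrightarrow> integrable M g \<Longrightarrow>
   integral\<^sup>L M (\<lambda>x. a * f x + b * g x) = a * integral\<^sup>L M f + b * integral\<^sup>L M (g :: _ \<Rightarrow> real)"
  by (simp add: integral_add integral_mult_right_zero)

lemma lin_diff: "integrable M f \<Longrightarrow> integrable M g \<Longrightarrow>
   integral\<^sup>L M (\<lambda>x. a * f x - b * g x) = a * integral\<^sup>L M f - b * integral\<^sup>L M (g :: _ \<Rightarrow> real)"
  by (simp add: integral_diff integral_mult_right_zero)

lemma int_P_zero: "n \<ge> 1 \<Longrightarrow> integral\<^sup>L UU (legendreP n) = 0"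
proof -
  assume "n \<ge> 1"
  then obtain k where n: "n = Suc k" by (cases n) auto
  define c where "c = 1 / (2 * real k + 3)"
  have "integral\<^sup>L UU (legendreP (Suc k)) =
    (c * (legendreP (Suc (Suc k)) 1 - legendreP k 1) -
     c * (legendreP (Suc (Suc k)) (-1) - legendreP k (-1))) / 2"
  proof (rule UU_FTC[where F="\<lambda>t. c * (legendreP (Suc (Suc k)) t - legendreP k t)"])
    fix x
    have h: "c * (2 * real k + 3) = 1" unfolding c_def by simp
    have "c * (dP (Suc (Suc k)) x - dP k x) = (c * (2 * real k + 3)) * legendreP (Suc k) x"
      by (simp add: dP_D)
    then have h2: "c * (dP (Suc (Suc k)) x - dP k x) = legendreP (Suc k) x" unfolding h by simp
    show "((\<lambda>t. c * (legendreP (Suc (Suc k)) t - legendreP k t)) has_real_derivative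
        legendreP (Suc k) x) (at x)"
      by (intro DERIV_cong[OF DERIV_cmult[OF DERIV_diff[OF legendreP_deriv legendreP_deriv]]])
         (rule h2)
  qed (rule legendreP_cont)
  then show ?thesis unfolding n by (simp add: legendreP_one legendreP_mone)
qed

lemma tP: "(2 * real r + 3) * (t * legendreP (Suc r) t) =
   (real r + 2) * legendreP (Suc (Suc r)) t + (real r + 1) * legendreP r t"
  unfolding P_rec' by simp

lemma UU_int[intro]: "integrable UU (\<lambda>t. t ^ k * legendreP m t * legendreP n t)"
  by (intro UU_integrable continuous_intros)

lemma UU_int'[intro]: "integrable UU (\<lambda>t. t ^ k * legendreP n t)"
  by (intro UU_integrable continuous_intros)

lemma int_tkP: "k < n \<Longrightarrow> integral\<^sup>L UU (\<lambda>t. t ^ k * legendreP n t) = 0"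
proof (induction k arbitrary: n)
  case 0 then show ?case using int_P_zero[of n] by simp
next
  case (Suc k)
  then obtain r where n: "n = Suc r" and r: "k < r" by (cases n) auto
  have eq: "(\<lambda>t. (2 * real r + 3) * (t ^ Suc k * legendreP n t)) = (\<lambda>t.
     (real r + 2) * (t ^ k * legendreP (Suc (Suc r)) t) + (real r + 1) * (t ^ k * legendreP r t))"
  proof
    fix t
    have "(2 * real r + 3) * (t ^ Suc k * legendreP n t) = t ^ k * ((2 * real r + 3) * (t * legendreP (Suc r) t))"
      unfolding n by (simp add: ac_simps)
    also have "\<dots> = t ^ k * ((real r + 2) * legendreP (Suc (Suc r)) t + (real r + 1) * legendreP r t)"
      unfolding tP ..
    finally show "(2 * real r + 3) * (t ^ Suc k * legendreP n t) = (real r + 2) * (t ^ k * legendreP (Suc (Suc r)) t) + (real r + 1) * (t ^ k * legendreP r t)"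
      by (simp add: algebra_simps)
  qed
  have "(2 * real r + 3) * integral\<^sup>L UU (\<lambda>t. t ^ Suc k * legendreP n t) = 0"
    unfolding integral_mult_right_zero[symmetric] eq
    using Suc.IH[of "Suc (Suc r)"] Suc.IH[of r] r by (simp add: lin_add UU_int')
  then show ?case by simp
qed

lemma int_tkPP: "m + k < n \<Longrightarrow> integral\<^sup>L UU (\<lambda>t. t ^ k * legendreP m t * legendreP n t) = 0"
proof (induction m arbitrary: k rule: less_induct)
  case (less m)
  show ?case
  proof (cases m)
    case 0 then show ?thesis using int_tkP[of k n] less.prems by simp
  next
    case (Suc m')
    show ?thesis
    proof (cases m')
      case 0
      then show ?thesis using int_tkP[of "Suc k" n] less.prems Suc by (simp add: mult.commute mult.left_commute)
    next
      case (Suc r)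
      have m: "m = Suc (Suc r)" using Suc \<open>m = Suc m'\<close> by simp
      have eq: "(\<lambda>t. (real r + 2) * (t ^ k * legendreP m t * legendreP n t)) = (\<lambda>t.
        (2 * real r + 3) * (t ^ Suc k * legendreP (Suc r) t * legendreP n t) - (real r + 1) * (t ^ k * legendreP r t * legendreP n t))"
      proof
        fix t
        have "(real r + 2) * (t ^ k * legendreP m t * legendreP n t) =
           t ^ k * legendreP n t * ((real r + 2) * legendreP (Suc (Suc r)) t)" unfolding m by (simp add: ac_simps)
        also have "\<dots> = t ^ k * legendreP n t * ((2 * real r + 3) * t * legendreP (Suc r) t - (real r + 1) * legendreP r t)"
          unfolding P_rec' ..
        finally show "(real r + 2) * (t ^ k * legendreP m t * legendreP n t) =
          (2 * real r + 3) * (t ^ Suc k * legendreP (Suc r) t * legendreP n t) - (real r + 1) * (t ^ k * legendreP r t * legendreP n t)"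
          by (simp add: algebra_simps)
      qed
      have "(real r + 2) * integral\<^sup>L UU (\<lambda>t. t ^ k * legendreP m t * legendreP n t) = 0"
        unfolding integral_mult_right_zero[symmetric] eq lin_diff[OF UU_int UU_int]
        using less.IH[of "Suc r" "Suc k"] less.IH[of r k] less.prems m by simp
      then show ?thesis by simp
    qed
  qed
qed

lemma int_PP_diff: "m \<noteq> n \<Longrightarrow> integral\<^sup>L UU (\<lambda>t. legendreP m t * legendreP n t) = 0"
proof -
  assume "m \<noteq> n"
  then consider "m < n" | "n < m" by linarith
  then show ?thesis
  proof cases
    case 1 then show ?thesis using int_tkPP[of m 0 n] by simp
  next
    case 2 then show ?thesis using int_tkPP[of n 0 m] by (simp add: mult.commute)
  qed
qed

lemma int_PSuc_sq: "integral\<^sup>L UU (\<lambda>t. legendreP (Suc n) t * legendreP (Suc n) t) = 1 / (2 * real n + 3)"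
proof (induction n)
  case 0
  have "integral\<^sup>L UU (\<lambda>t. t * t) = (1 ^ 3 / 3 - (- 1) ^ 3 / 3) / 2"
    by (rule UU_FTC[where F="\<lambda>t. t ^ 3 / 3"])
       (auto intro!: derivative_eq_intros continuous_intros simp: power2_eq_square)
  then show ?case by simp
next
  case (Suc n)
  define p1 where "p1 = legendreP (Suc n)"
  define p2 where "p2 = legendreP (Suc (Suc n))"
  define p0 where "p0 = legendreP n"
  define p3 where "p3 = legendreP (Suc (Suc (Suc n)))"
  have i: "integrable UU (\<lambda>t. legendreP m t * legendreP k t)" for m k
    by (intro UU_integrable continuous_intros)
  have i2: "integrable UU (\<lambda>t. t * legendreP m t * legendreP k t)" for m k
    by (intro UU_integrable continuous_intros)
  have o1: "integral\<^sup>L UU (\<lambda>t. p0 t * p2 t) = 0" unfolding p0_def p2_def by (rule int_PP_diff) simp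
  have o2: "integral\<^sup>L UU (\<lambda>t. p1 t * p3 t) = 0" unfolding p1_def p3_def by (rule int_PP_diff) simp
  have e1: "(\<lambda>t. (real n + 2) * (p2 t * p2 t)) = (\<lambda>t. (2 * real n + 3) * (t * p1 t * p2 t) - (real n + 1) * (p0 t * p2 t))"
  proof
    fix t
    have "(real n + 2) * (p2 t * p2 t) = p2 t * ((real n + 2) * p2 t)" by simp
    also have "\<dots> = p2 t * ((2 * real n + 3) * t * p1 t - (real n + 1) * p0 t)"
      unfolding p0_def p1_def p2_def P_rec' ..
    finally show "(real n + 2) * (p2 t * p2 t) = (2 * real n + 3) * (t * p1 t * p2 t) - (real n + 1) * (p0 t * p2 t)"
      by (simp add: algebra_simps)
  qed
  have e2: "(\<lambda>t. (2 * real n + 5) * (t * p1 t * p2 t)) = (\<lambda>t. (real n + 3) * (p1 t * p3 t) + (real n + 2) * (p1 t * p1 t))"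
  proof
    fix t
    have "(2 * real n + 5) * (t * p1 t * p2 t) = p1 t * ((2 * real (Suc n) + 3) * (t * p2 t))" by (simp add: algebra_simps)
    also have "\<dots> = p1 t * ((real (Suc n) + 2) * p3 t + (real (Suc n) + 1) * p1 t)"
      unfolding p1_def p2_def p3_def tP ..
    finally show "(2 * real n + 5) * (t * p1 t * p2 t) = (real n + 3) * (p1 t * p3 t) + (real n + 2) * (p1 t * p1 t)"
      by (simp add: algebra_simps)
  qed
  have b: "(2 * real n + 5) * integral\<^sup>L UU (\<lambda>t. t * p1 t * p2 t) = (real n + 2) * (1 / (2 * real n + 3))"
    unfolding integral_mult_right_zero[symmetric] e2
    using o2 Suc.IH unfolding p1_def p2_def p3_def by (simp add: lin_add i)
  have a: "(real n + 2) * integral\<^sup>L UU (\<lambda>t. p2 t * p2 t) = (2 * real n + 3) * integral\<^sup>L UU (\<lambda>t. t * p1 t * p2 t)"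
    unfolding integral_mult_right_zero[symmetric] e1
    using o1 unfolding p0_def p1_def p2_def by (simp add: lin_diff i i2)
  define A where "A = integral\<^sup>L UU (\<lambda>t. p2 t * p2 t)"
  define B where "B = integral\<^sup>L UU (\<lambda>t. t * p1 t * p2 t)"
  have "(2 * real n + 5) * ((real n + 2) * A) = (2 * real n + 3) * ((2 * real n + 5) * B)"
    using a unfolding A_def B_def by simp
  also have "\<dots> = (2 * real n + 3) * ((real n + 2) * (1 / (2 * real n + 3)))"
    using b unfolding B_def by simp
  also have "\<dots> = real n + 2" by simp
  finally have "(real n + 2) * ((2 * real n + 5) * A) = (real n + 2) * 1" by (simp add: ac_simps)
  then have "(2 * real n + 5) * A = 1" by (subst (asm) mult_left_cancel) auto
  then have "integral\<^sup>L UU (\<lambda>t. p2 t * p2 t) = 1 / (2 * real n + 5)"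
    unfolding A_def by (simp add: field_simps)
  then show ?case unfolding p2_def by (simp add: field_simps)
qed

lemma int_PP_sq: "integral\<^sup>L UU (\<lambda>t. legendreP n t * legendreP n t) = 1 / (2 * real n + 1)"
proof (cases n)
  case 0
  interpret prob_space UU by (rule prob_space_uniform_measure) auto
  show ?thesis using 0 by simp
next
  case (Suc k) then show ?thesis using int_PSuc_sq[of k] by simp
qed

lemma int_LL: "integral\<^sup>L UU (\<lambda>t. legendreL m t * legendreL n t) = (if m = n then 1 else 0)"
proof -
  have "integral\<^sup>L UU (\<lambda>t. legendreL m t * legendreL n t) =
      sqrt (2 * real m + 1) * sqrt (2 * real n + 1) * integral\<^sup>L UU (\<lambda>t. legendreP m t * legendreP n t)"
    unfolding legendreL_def by (simp add: ac_simps integral_mult_right_zero[symmetric])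
  moreover have "sqrt (2 * real n + 1) * sqrt (2 * real n + 1) = 2 * real n + 1" by simp
  ultimately show ?thesis using int_PP_diff[of m n] int_PP_sq[of n]
    by auto
qed

lemma UU_prob: "prob_space UU" by (rule prob_space_uniform_measure) auto

interpretation UUP: product_prob_space "\<lambda>_::nat. UU" UNIV
  by (intro product_prob_space.intro product_sigma_finite.intro product_prob_space_axioms.intro)
     (auto simp: UU_prob prob_space_imp_sigma_finite)

lemma cont_meas: "continuous_on UNIV f \<Longrightarrow> (f::real\<Rightarrow>real) \<in> borel_measurable UU"
proof -
  assume "continuous_on UNIV f"
  then have "f \<in> borel_measurable borel" by (rule borel_measurable_continuous_onI)
  moreover have "sets UU = sets borel" by simp
  ultimately show ?thesis using measurable_cong_sets[of UU borel borel borel] by simp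
qed

lemma muY_prod:
  fixes f :: "nat \<Rightarrow> real \<Rightarrow> real"
  assumes I: "finite I" and c: "\<And>i. i \<in> I \<Longrightarrow> continuous_on UNIV (f i)"
  shows "integrable muY (\<lambda>y. \<Prod>i\<in>I. f i (y i))"
    "integral\<^sup>L muY (\<lambda>y. \<Prod>i\<in>I. f i (y i)) = (\<Prod>i\<in>I. integral\<^sup>L UU (f i))"
proof -
  let ?g = "\<lambda>x. \<Prod>i\<in>I. f i (x i)"
  have D: "distr muY (PiM I (\<lambda>_. UU)) (\<lambda>x. restrict x I) = PiM I (\<lambda>_. UU)"
    unfolding muY_def using I by (intro UUP.distr_PiM_restrict_finite) auto
  have mr: "(\<lambda>x. restrict x I) \<in> measurable muY (PiM I (\<lambda>_. UU))"
    unfolding muY_def by (rule measurable_restrict_subset) auto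
  have mg: "?g \<in> borel_measurable (PiM I (\<lambda>_. UU))"
  proof (rule borel_measurable_prod)
    fix i assume "i \<in> I"
    then show "(\<lambda>x. f i (x i)) \<in> borel_measurable (PiM I (\<lambda>_. UU))"
      using c cont_meas by (intro measurable_compose[OF measurable_component_singleton]) auto
  qed
  have ig: "integrable (PiM I (\<lambda>_. UU)) ?g"
    using I c by (intro UUP.product_integrable_prod UU_integrable) auto
  have eq: "\<And>y. ?g (restrict y I) = (\<Prod>i\<in>I. f i (y i))"
    by (rule prod.cong) auto
  have "integrable (distr muY (PiM I (\<lambda>_. UU)) (\<lambda>x. restrict x I)) ?g" using ig D by simp
  then show "integrable muY (\<lambda>y. \<Prod>i\<in>I. f i (y i))"
    unfolding integrable_distr_eq[OF mr mg] eq .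
  have "integral\<^sup>L (PiM I (\<lambda>_. UU)) ?g = (\<Prod>i\<in>I. integral\<^sup>L UU (f i))"
    using I c by (intro UUP.product_integral_prod UU_integrable) auto
  then have "integral\<^sup>L (distr muY (PiM I (\<lambda>_. UU)) (\<lambda>x. restrict x I)) ?g = (\<Prod>i\<in>I. integral\<^sup>L UU (f i))"
    using D by simp
  then show "integral\<^sup>L muY (\<lambda>y. \<Prod>i\<in>I. f i (y i)) = (\<Prod>i\<in>I. integral\<^sup>L UU (f i))"
    unfolding integral_distr[OF mr mg] eq .
qed

lemma legendreL_cont[continuous_intros]: "continuous_on UNIV (legendreL n)"
  unfolding legendreL_def by (intro continuous_intros)

lemma legendreL_0[simp]: "legendreL 0 t = 1"
  by (simp add: legendreL_def)

lemma tensL_on: "finite I \<Longrightarrow> {j. \<nu> j \<noteq> 0} \<subseteq> I \<Longrightarrow> tensL \<nu> y = (\<Prod>i\<in>I. legendreL (\<nu> i) (y i))"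
  unfolding tensL_def by (rule prod.mono_neutral_left) auto

lemma tensLL:
  assumes "\<nu> \<in> Fidx" "\<nu>' \<in> Fidx"
  shows "integrable muY (\<lambda>y. tensL \<nu> y * tensL \<nu>' y)"
    "integral\<^sup>L muY (\<lambda>y. tensL \<nu> y * tensL \<nu>' y) = (if \<nu> = \<nu>' then 1 else 0)"
proof -
  define I where "I = {j. \<nu> j \<noteq> 0} \<union> {j. \<nu>' j \<noteq> 0}"
  have I: "finite I" using assms unfolding I_def Fidx_def by auto
  have eq: "(\<lambda>y. tensL \<nu> y * tensL \<nu>' y) = (\<lambda>y. \<Prod>i\<in>I. legendreL (\<nu> i) (y i) * legendreL (\<nu>' i) (y i))"
    using I by (auto simp: tensL_on[of I] I_def prod.distrib)
  have c: "continuous_on UNIV (\<lambda>t. legendreL (\<nu> i) t * legendreL (\<nu>' i) t)" for i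
    by (intro continuous_intros)
  show "integrable muY (\<lambda>y. tensL \<nu> y * tensL \<nu>' y)"
    unfolding eq by (rule muY_prod[OF I c])
  have "integral\<^sup>L muY (\<lambda>y. tensL \<nu> y * tensL \<nu>' y) = (\<Prod>i\<in>I. (if \<nu> i = \<nu>' i then 1 else 0))"
    unfolding eq muY_prod(2)[OF I c] int_LL ..
  also have "\<dots> = (if \<nu> = \<nu>' then 1 else 0)"
  proof (cases "\<nu> = \<nu>'")
    case False
    then obtain i where i: "\<nu> i \<noteq> \<nu>' i" by auto
    then have "i \<in> I" unfolding I_def by auto
    then show ?thesis using i I False by (auto intro!: prod_zero)
  qed simp
  finally show "integral\<^sup>L muY (\<lambda>y. tensL \<nu> y * tensL \<nu>' y) = (if \<nu> = \<nu>' then 1 else 0)" .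
qed

lemma tensLLj:
  assumes "\<nu> \<in> Fidx" "\<nu>' \<in> Fidx"
  shows "integrable muY (\<lambda>y. y j * tensL \<nu> y * tensL \<nu>' y)"
    and "\<nu> j = 0 \<Longrightarrow> \<nu>' j = 0 \<Longrightarrow> Mmat j \<nu> \<nu>' = 0"
proof -
  define I where "I = insert j ({j. \<nu> j \<noteq> 0} \<union> {j. \<nu>' j \<noteq> 0})"
  have I: "finite I" using assms unfolding I_def Fidx_def by auto
  define f where "f i t = (if i = j then t else 1) * legendreL (\<nu> i) t * legendreL (\<nu>' i) t" for i t
  have eq: "(\<lambda>y. y j * tensL \<nu> y * tensL \<nu>' y) = (\<lambda>y. \<Prod>i\<in>I. f i (y i))"
  proof
    fix y
    have t1: "tensL \<nu> y = (\<Prod>i\<in>I. legendreL (\<nu> i) (y i))" by (rule tensL_on[OF I]) (auto simp: I_def)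
    have t2: "tensL \<nu>' y = (\<Prod>i\<in>I. legendreL (\<nu>' i) (y i))" by (rule tensL_on[OF I]) (auto simp: I_def)
    have "(\<Prod>i\<in>I. f i (y i)) = (\<Prod>i\<in>I. (if i = j then y i else 1)) * (tensL \<nu> y * tensL \<nu>' y)"
      unfolding f_def t1 t2 by (simp add: prod.distrib)
    also have "(\<Prod>i\<in>I. (if i = j then y i else 1)) = y j"
      using I by (simp add: prod.delta I_def)
    finally show "y j * tensL \<nu> y * tensL \<nu>' y = (\<Prod>i\<in>I. f i (y i))" by simp
  qed
  have c: "continuous_on UNIV (f i)" for i
    unfolding f_def by (cases "i = j") (auto intro!: continuous_intros)
  show "integrable muY (\<lambda>y. y j * tensL \<nu> y * tensL \<nu>' y)"
    unfolding eq by (rule muY_prod[OF I c])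
  assume z: "\<nu> j = 0" "\<nu>' j = 0"
  have "f j = legendreP 1" unfolding f_def using z by (simp add: fun_eq_iff)
  then have "integral\<^sup>L UU (f j) = integral\<^sup>L UU (legendreP 1)" by simp
  also have "\<dots> = 0" by (rule int_P_zero) simp
  finally have "integral\<^sup>L UU (f j) = 0" .
  moreover have "j \<in> I" unfolding I_def by simp
  ultimately show "Mmat j \<nu> \<nu>' = 0"
    unfolding Mmat_def eq muY_prod(2)[OF I c] using I by (auto intro!: prod_zero)
qed

lemma AE_muY: "AE y in muY. \<bar>y j\<bar> \<le> 1"
proof -
  have "AE t in UU. \<bar>t\<bar> \<le> 1"
    by (rule AE_uniform_measureI) auto
  then show ?thesis unfolding muY_def by (rule UUP.AE_component[of j, simplified])
qed

lemma int_dsum: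
  fixes F :: "'p \<Rightarrow> 'q \<Rightarrow> 'b \<Rightarrow> real"
  assumes "finite P" "finite Q" "\<And>p q. p \<in> P \<Longrightarrow> q \<in> Q \<Longrightarrow> integrable M (F p q)"
  shows "integrable M (\<lambda>y. \<Sum>p\<in>P. \<Sum>q\<in>Q. c p q * F p q y)"
    "integral\<^sup>L M (\<lambda>y. \<Sum>p\<in>P. \<Sum>q\<in>Q. c p q * F p q y) = (\<Sum>p\<in>P. \<Sum>q\<in>Q. c p q * integral\<^sup>L M (F p q))"
  using assms by (auto simp: integral_sum integral_mult_right_zero intro!: integrable_sum sum.cong)

lemma amgm_inner: "\<bar>(x::'a::real_inner) \<bullet> y\<bar> \<le> (x \<bullet> x + y \<bullet> y) / 2"
proof -
  have "\<bar>x \<bullet> y\<bar> \<le> norm x * norm y" by (rule Cauchy_Schwarz_ineq2)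
  also have "\<dots> \<le> ((norm x)\<^sup>2 + (norm y)\<^sup>2) / 2"
    using sum_squares_bound[of "norm x" "norm y"] by (simp add: field_simps)
  finally show ?thesis by (simp add: power2_norm_eq_inner)
qed

lemma Y_amgm:
  fixes g :: "'p \<Rightarrow> 'a::real_inner" and h :: "'q \<Rightarrow> 'a"
  assumes P: "finite P" and Q: "finite Q" and nuF: "\<And>p. p \<in> P \<Longrightarrow> nu p \<in> Fidx"
    and muF: "\<And>q. q \<in> Q \<Longrightarrow> mu q \<in> Fidx"
  shows "\<bar>\<Sum>p\<in>P. \<Sum>q\<in>Q. a p * b q * (g p \<bullet> h q) * Mmat j (nu p) (mu q)\<bar> \<le>
     ((\<Sum>p\<in>P. \<Sum>p'\<in>P. if nu p = nu p' then a p * a p' * (g p \<bullet> g p') else 0) +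
      (\<Sum>q\<in>Q. \<Sum>q'\<in>Q. if mu q = mu q' then b q * b q' * (h q \<bullet> h q') else 0)) / 2"
proof -
  define W where "W y = (\<Sum>p\<in>P. (a p * tensL (nu p) y) *\<^sub>R g p)" for y
  define V where "V y = (\<Sum>q\<in>Q. (b q * tensL (mu q) y) *\<^sub>R h q)" for y
  have WV: "y j * (W y \<bullet> V y) = (\<Sum>p\<in>P. \<Sum>q\<in>Q. (a p * b q * (g p \<bullet> h q)) * (y j * tensL (nu p) y * tensL (mu q) y))" for y
    unfolding W_def V_def by (simp add: inner_sum_left inner_sum_right sum_distrib_left ac_simps) (rule sum.swap)
  have WW: "W y \<bullet> W y = (\<Sum>p\<in>P. \<Sum>q\<in>P. (a p * a q * (g p \<bullet> g q)) * (tensL (nu p) y * tensL (nu q) y))" for y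
    unfolding W_def by (simp add: inner_sum_left inner_sum_right sum_distrib_left ac_simps inner_commute)
  have VV: "V y \<bullet> V y = (\<Sum>p\<in>Q. \<Sum>q\<in>Q. (b p * b q * (h p \<bullet> h q)) * (tensL (mu p) y * tensL (mu q) y))" for y
    unfolding V_def by (simp add: inner_sum_left inner_sum_right sum_distrib_left ac_simps inner_commute)
  have iWV: "integrable muY (\<lambda>y. y j * (W y \<bullet> V y))"
    unfolding WV by (rule int_dsum(1)[OF P Q]) (auto intro!: tensLLj nuF muF)
  have iWW: "integrable muY (\<lambda>y. W y \<bullet> W y)"
    unfolding WW by (rule int_dsum(1)[OF P P]) (auto intro!: tensLL nuF)
  have iVV: "integrable muY (\<lambda>y. V y \<bullet> V y)"
    unfolding VV by (rule int_dsum(1)[OF Q Q]) (auto intro!: tensLL muF)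
  have e1: "(\<Sum>p\<in>P. \<Sum>q\<in>Q. a p * b q * (g p \<bullet> h q) * Mmat j (nu p) (mu q)) = integral\<^sup>L muY (\<lambda>y. y j * (W y \<bullet> V y))"
    unfolding WV Mmat_def by (subst int_dsum(2)[OF P Q]) (auto intro!: tensLLj nuF muF)
  have e2: "integral\<^sup>L muY (\<lambda>y. W y \<bullet> W y) = (\<Sum>p\<in>P. \<Sum>p'\<in>P. if nu p = nu p' then a p * a p' * (g p \<bullet> g p') else 0)"
    unfolding WW by (subst int_dsum(2)[OF P P]) (auto intro!: tensLL nuF sum.cong simp: tensLL(2) nuF)
  have e3: "integral\<^sup>L muY (\<lambda>y. V y \<bullet> V y) = (\<Sum>q\<in>Q. \<Sum>q'\<in>Q. if mu q = mu q' then b q * b q' * (h q \<bullet> h q') else 0)"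
    unfolding VV by (subst int_dsum(2)[OF Q Q]) (auto intro!: tensLL muF sum.cong simp: tensLL(2) muF)
  have "\<bar>integral\<^sup>L muY (\<lambda>y. y j * (W y \<bullet> V y))\<bar> \<le> integral\<^sup>L muY (\<lambda>y. \<bar>y j * (W y \<bullet> V y)\<bar>)"
    by (rule integral_abs_bound)
  also have "\<dots> \<le> integral\<^sup>L muY (\<lambda>y. (W y \<bullet> W y + V y \<bullet> V y) / 2)"
  proof (rule integral_mono_AE)
    show "integrable muY (\<lambda>y. \<bar>y j * (W y \<bullet> V y)\<bar>)" using iWV by (rule integrable_abs)
    show "integrable muY (\<lambda>y. (W y \<bullet> W y + V y \<bullet> V y) / 2)" using iWW iVV by auto
    show "AE y in muY. \<bar>y j * (W y \<bullet> V y)\<bar> \<le> (W y \<bullet> W y + V y \<bullet> V y) / 2"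
      using AE_muY[of j]
    proof eventually_elim
      case (elim y)
      have "\<bar>y j * (W y \<bullet> V y)\<bar> = \<bar>y j\<bar> * \<bar>W y \<bullet> V y\<bar>" by (simp add: abs_mult)
      also have "\<dots> \<le> 1 * \<bar>W y \<bullet> V y\<bar>" using elim by (intro mult_right_mono) auto
      also have "\<dots> \<le> (W y \<bullet> W y + V y \<bullet> V y) / 2" using amgm_inner by simp
      finally show ?case .
    qed
  qed
  also have "\<dots> = (integral\<^sup>L muY (\<lambda>y. W y \<bullet> W y) + integral\<^sup>L muY (\<lambda>y. V y \<bullet> V y)) / 2"
    using iWW iVV by simp
  finally show ?thesis unfolding e1 e2 e3 .
qed

lemma H10_wg: "u \<in> H10 D \<Longrightarrow> is_weak_grad D u (wgrad D u)"
  unfolding H10_def wgrad_def by (auto intro: someI[where P="is_weak_grad D u"])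

lemma wg0: "is_weak_grad D (\<lambda>_. 0::real) (wgrad D (\<lambda>_. 0))"
proof -
  have "is_weak_grad D (\<lambda>_. 0::real) (\<lambda>_. 0)"
    unfolding is_weak_grad_def sq_int_def set_borel_measurable_def set_integrable_def
    by (simp add: set_lebesgue_integral_def)
  then show ?thesis unfolding wgrad_def by (metis someI)
qed

lemma sqI:
  assumes "sq_int D f"
  shows "(\<lambda>x. indicator D x *\<^sub>R f x) \<in> borel_measurable lebesgue"
    "integrable lebesgue (\<lambda>x. indicator D x * (norm (f x))\<^sup>2)"
  using assms unfolding sq_int_def set_borel_measurable_def set_integrable_def by auto

lemma ind_inner: "indicator D x * (f x \<bullet> g x) = (indicator D x *\<^sub>R f x) \<bullet> (indicator D x *\<^sub>R g x)"
  by (simp split: split_indicator)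

lemma inner_int:
  fixes f g :: "'a::euclidean_space \<Rightarrow> 'b::euclidean_space"
  assumes "sq_int D f" "sq_int D g"
  shows "integrable lebesgue (\<lambda>x. indicator D x * (f x \<bullet> g x))"
proof (rule Bochner_Integration.integrable_bound[where f="\<lambda>x. (indicator D x * (norm (f x))\<^sup>2 + indicator D x * (norm (g x))\<^sup>2) / 2"])
  show "integrable lebesgue (\<lambda>x. (indicator D x * (norm (f x))\<^sup>2 + indicator D x * (norm (g x))\<^sup>2) / 2)"
    using sqI(2)[OF assms(1)] sqI(2)[OF assms(2)] by auto
  show "(\<lambda>x. indicator D x * (f x \<bullet> g x)) \<in> borel_measurable lebesgue"
    unfolding ind_inner using sqI(1)[OF assms(1)] sqI(1)[OF assms(2)] by measurable
  show "AE x in lebesgue. norm (indicator D x * (f x \<bullet> g x)) \<le>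
      norm ((indicator D x * (norm (f x))\<^sup>2 + indicator D x * (norm (g x))\<^sup>2) / 2)"
  proof (rule AE_I2)
    fix x
    have "\<bar>f x \<bullet> g x\<bar> \<le> ((norm (f x))\<^sup>2 + (norm (g x))\<^sup>2) / 2"
      using amgm_inner[of "f x" "g x"] by (simp add: power2_norm_eq_inner)
    then show "norm (indicator D x * (f x \<bullet> g x)) \<le>
      norm ((indicator D x * (norm (f x))\<^sup>2 + indicator D x * (norm (g x))\<^sup>2) / 2)"
      by (auto split: split_indicator)
  qed
qed

lemma inner_int_h:
  fixes f g :: "'a::euclidean_space \<Rightarrow> 'b::euclidean_space"
  assumes "sq_int D f" "sq_int D g" and h: "h \<in> borel_measurable lebesgue"
    and hb: "AE x in lebesgue. x \<in> D \<longrightarrow> \<bar>h x\<bar> \<le> 1"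
  shows "integrable lebesgue (\<lambda>x. indicator D x * (h x * (f x \<bullet> g x)))"
proof (rule Bochner_Integration.integrable_bound[where f="\<lambda>x. indicator D x * (f x \<bullet> g x)"])
  show "integrable lebesgue (\<lambda>x. indicator D x * (f x \<bullet> g x))" by (rule inner_int[OF assms(1,2)])
  have "(\<lambda>x. h x * (indicator D x * (f x \<bullet> g x))) \<in> borel_measurable lebesgue"
    using h inner_int[OF assms(1,2)] by measurable
  then show "(\<lambda>x. indicator D x * (h x * (f x \<bullet> g x))) \<in> borel_measurable lebesgue"
    by (simp add: ac_simps)
  show "AE x in lebesgue. norm (indicator D x * (h x * (f x \<bullet> g x))) \<le> norm (indicator D x * (f x \<bullet> g x))"
    using hb
  proof eventually_elim
    case (elim x)
    then show ?case
      by (auto split: split_indicator simp: abs_mult intro!: mult_left_le_one_le)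
  qed
qed

lemma group_sq:
  fixes G :: "'p \<Rightarrow> 'a::real_inner" and k :: "'p \<Rightarrow> 'n"
  assumes P: "finite P"
  shows "(\<Sum>p\<in>P. \<Sum>p'\<in>P. if k p = k p' then a p * a p' * (G p \<bullet> G p') else 0) =
    (\<Sum>\<nu>\<in>k ` P. (norm (\<Sum>p\<in>{p\<in>P. k p = \<nu>}. a p *\<^sub>R G p))\<^sup>2)"
proof -
  have "(\<Sum>p\<in>P. \<Sum>p'\<in>P. if k p = k p' then a p * a p' * (G p \<bullet> G p') else 0) =
     (\<Sum>p\<in>P. \<Sum>p'\<in>{p'\<in>P. k p' = k p}. a p * a p' * (G p \<bullet> G p'))"
  proof (rule sum.cong[OF refl])
    fix p
    show "(\<Sum>p'\<in>P. if k p = k p' then a p * a p' * (G p \<bullet> G p') else 0) =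
      (\<Sum>p'\<in>{p'\<in>P. k p' = k p}. a p * a p' * (G p \<bullet> G p'))"
      using sum.inter_filter[OF P, of "\<lambda>p'. a p * a p' * (G p \<bullet> G p')" "\<lambda>p'. k p' = k p"]
      by (simp add: eq_commute)
  qed
  also have "\<dots> = (\<Sum>\<nu>\<in>k ` P. \<Sum>p\<in>{p\<in>P. k p = \<nu>}. \<Sum>p'\<in>{p'\<in>P. k p' = k p}. a p * a p' * (G p \<bullet> G p'))"
    using P by (rule sum.image_gen)
  also have "\<dots> = (\<Sum>\<nu>\<in>k ` P. \<Sum>p\<in>{p\<in>P. k p = \<nu>}. \<Sum>p'\<in>{p'\<in>P. k p' = \<nu>}. a p * a p' * (G p \<bullet> G p'))"
    by (intro sum.cong refl) auto
  also have "\<dots> = (\<Sum>\<nu>\<in>k ` P. (norm (\<Sum>p\<in>{p\<in>P. k p = \<nu>}. a p *\<^sub>R G p))\<^sup>2)"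
    by (simp add: power2_norm_eq_inner inner_sum_left inner_sum_right sum_distrib_left ac_simps inner_commute)
  finally show ?thesis .
qed

lemma group_sq_nonneg:
  fixes G :: "'p \<Rightarrow> 'a::real_inner" and k :: "'p \<Rightarrow> 'n"
  assumes P: "finite P"
  shows "0 \<le> (\<Sum>p\<in>P. \<Sum>p'\<in>P. if k p = k p' then a p * a p' * (G p \<bullet> G p') else 0)"
  unfolding group_sq[OF P] by (intro sum_nonneg) auto

lemma geo_bound:
  fixes r :: real
  assumes F: "finite F" "\<And>l. l \<in> F \<Longrightarrow> L \<le> l" and r: "0 \<le> r" "r < 1"
  shows "(\<Sum>l\<in>F. r ^ l) \<le> r ^ L / (1 - r)"
proof (cases "F = {}")
  case True then show ?thesis using r by simp
next
  case False
  define N where "N = Max F"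
  have sub: "F \<subseteq> {L..N}" using F False unfolding N_def by auto
  have LN: "L \<le> N" using sub False by auto
  have "(\<Sum>l\<in>F. r ^ l) \<le> (\<Sum>l\<in>{L..N}. r ^ l)"
    using sub r by (intro sum_mono2) auto
  also have "(1 - r) * (\<Sum>l\<in>{L..N}. r ^ l) = r ^ L - r ^ Suc N"
    using sum_gp_multiplied[OF LN, of r] by simp
  then have "(\<Sum>l\<in>{L..N}. r ^ l) = (r ^ L - r ^ Suc N) / (1 - r)"
    using r by (simp add: field_simps)
  also have "\<dots> \<le> r ^ L / (1 - r)"
    using r by (intro divide_right_mono) auto
  finally show ?thesis .
qed

lemma rho_bound:
  fixes \<xi> :: "'l \<Rightarrow> 'x \<Rightarrow> real" and lev :: "'l \<Rightarrow> nat"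
  assumes inj: "inj enum" and mono: "mono (lev \<circ> enum)" and Lam: "\<And>j. enum j \<in> Lam"
    and Kc: "\<And>l. finite {\<mu>\<in>Lam. lev \<mu> = l \<and> \<xi> \<mu> x \<noteq> 0} \<and> card {\<mu>\<in>Lam. lev \<mu> = l \<and> \<xi> \<mu> x \<noteq> 0} \<le> K"
    and JM: "finite JM" "\<And>j. j \<in> JM \<Longrightarrow> M \<le> j" "\<And>j. j \<in> JM \<Longrightarrow> \<bar>\<xi> (enum j) x\<bar> \<le> 1"
    and alpha: "\<alpha> > 0"
  shows "(\<Sum>j\<in>JM. \<bar>2 powr (- \<alpha> * real (lev (enum j))) * \<xi> (enum j) x\<bar>) \<le>
     real K * (2 powr (- \<alpha>)) ^ lev (enum M) / (1 - 2 powr (- \<alpha>))"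
proof -
  define r where "r = 2 powr (- \<alpha>)"
  have "2 powr (- \<alpha>) < 2 powr 0" by (rule powr_less_mono) (use alpha in auto)
  then have r: "0 \<le> r" "r < 1" unfolding r_def by auto
  have rp: "2 powr (- \<alpha> * real n) = r ^ n" for n
  proof -
    have "(2 powr (-\<alpha>)) ^ n = (2 powr (-\<alpha>)) powr (real n)" by (simp add: powr_realpow)
    also have "\<dots> = 2 powr (-\<alpha> * real n)" by (simp add: powr_powr)
    finally show ?thesis unfolding r_def ..
  qed
  define lv where "lv j = lev (enum j)" for j
  have "(\<Sum>j\<in>JM. \<bar>2 powr (- \<alpha> * real (lev (enum j))) * \<xi> (enum j) x\<bar>) =
     (\<Sum>l\<in>lv ` JM. \<Sum>j\<in>{j\<in>JM. lv j = l}. \<bar>2 powr (- \<alpha> * real (lev (enum j))) * \<xi> (enum j) x\<bar>)"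
    using JM(1) by (rule sum.image_gen)
  also have "\<dots> \<le> (\<Sum>l\<in>lv ` JM. real K * r ^ l)"
  proof (rule sum_mono)
    fix l assume "l \<in> lv ` JM"
    have "(\<Sum>j\<in>{j\<in>JM. lv j = l}. \<bar>2 powr (- \<alpha> * real (lev (enum j))) * \<xi> (enum j) x\<bar>) \<le>
        (\<Sum>j\<in>{j\<in>JM. lv j = l}. r ^ l * (if \<xi> (enum j) x \<noteq> 0 then 1 else 0))"
    proof (rule sum_mono)
      fix j assume j: "j \<in> {j\<in>JM. lv j = l}"
      then have "\<bar>\<xi> (enum j) x\<bar> \<le> 1" using JM(3) by auto
      then show "\<bar>2 powr (- \<alpha> * real (lev (enum j))) * \<xi> (enum j) x\<bar> \<le> r ^ l * (if \<xi> (enum j) x \<noteq> 0 then 1 else 0)"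
        using j r unfolding rp lv_def by (auto simp: abs_mult intro!: mult_left_le)
    qed
    also have "\<dots> = r ^ l * real (card {j\<in>{j\<in>JM. lv j = l}. \<xi> (enum j) x \<noteq> 0})"
    proof -
      have e: "{j \<in> JM. lv j = l} \<inter> {j. \<xi> (enum j) x \<noteq> 0} = {j\<in>{j\<in>JM. lv j = l}. \<xi> (enum j) x \<noteq> 0}" by auto
      show ?thesis using JM(1) by (simp add: sum_distrib_left[symmetric] sum.If_cases e)
    qed
    also have "\<dots> \<le> r ^ l * real K"
    proof (intro mult_left_mono)
      have "card {j\<in>{j\<in>JM. lv j = l}. \<xi> (enum j) x \<noteq> 0} \<le> card {\<mu>\<in>Lam. lev \<mu> = l \<and> \<xi> \<mu> x \<noteq> 0}"
        using Kc[of l] Lam inj unfolding lv_def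
        by (intro card_inj_on_le[where f=enum]) (auto simp: inj_on_def inj_def)
      then show "real (card {j\<in>{j\<in>JM. lv j = l}. \<xi> (enum j) x \<noteq> 0}) \<le> real K" using Kc[of l] by simp
    qed (use r in simp)
    finally show "(\<Sum>j\<in>{j\<in>JM. lv j = l}. \<bar>2 powr (- \<alpha> * real (lev (enum j))) * \<xi> (enum j) x\<bar>) \<le> real K * r ^ l"
      by (simp add: mult.commute)
  qed
  also have "\<dots> = real K * (\<Sum>l\<in>lv ` JM. r ^ l)" by (simp add: sum_distrib_left)
  also have "\<dots> \<le> real K * (r ^ lev (enum M) / (1 - r))"
  proof (intro mult_left_mono geo_bound r)
    show "finite (lv ` JM)" using JM(1) by simp
    fix l assume "l \<in> lv ` JM"
    then obtain j where "j \<in> JM" "l = lv j" by auto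
    then show "lev (enum M) \<le> l" using JM(2) mono unfolding lv_def mono_def by auto
  qed simp
  finally show ?thesis unfolding r_def by simp
qed

lemma M_L:
  fixes lev :: "'l \<Rightarrow> nat"
  assumes inj: "inj enum" and mono: "mono (lev \<circ> enum)" and Lam: "\<And>j. enum j \<in> Lam"
    and fin: "finite {\<mu>\<in>Lam. lev \<mu> \<le> lev (enum M)}"
  shows "real M + 1 \<le> real (card {\<mu>\<in>Lam. lev \<mu> \<le> lev (enum M)})"
proof -
  have "enum ` {0..M} \<subseteq> {\<mu>\<in>Lam. lev \<mu> \<le> lev (enum M)}"
    using mono Lam unfolding mono_def by auto
  then have "card (enum ` {0..M}) \<le> card {\<mu>\<in>Lam. lev \<mu> \<le> lev (enum M)}"
    using fin by (rule card_mono[rotated])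
  moreover have "card (enum ` {0..M}) = M + 1"
    using inj by (simp add: card_image inj_on_def inj_def)
  ultimately show ?thesis by simp
qed

lemma ind_norm_eq: "indicator D x * (norm (f x - (\<Sum>l\<in>S. c l *\<^sub>R g l x)))\<^sup>2 =
   (norm (indicator D x *\<^sub>R f x - (\<Sum>l\<in>S. c l *\<^sub>R (indicator D x *\<^sub>R g l x))))\<^sup>2"
  by (simp split: split_indicator)

lemma ind_norm_meas:
  fixes f :: "'a::euclidean_space \<Rightarrow> 'a" and g :: "'s \<Rightarrow> 'a \<Rightarrow> 'a"
  assumes "sq_int D f" "\<And>l. sq_int D (g l)"
  shows "(\<lambda>x. indicator D x * (norm (f x - (\<Sum>l\<in>S. c l *\<^sub>R g l x)))\<^sup>2) \<in> borel_measurable lebesgue"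
proof -
  have m: "(\<lambda>x. indicator D x *\<^sub>R g l x) \<in> borel_measurable lebesgue" for l using sqI(1)[OF assms(2)] .
  have "(\<lambda>x. (norm (indicator D x *\<^sub>R f x - (\<Sum>l\<in>S. c l *\<^sub>R (indicator D x *\<^sub>R g l x))))\<^sup>2) \<in> borel_measurable lebesgue"
    using sqI(1)[OF assms(1)] m by measurable
  then show ?thesis unfolding ind_norm_eq .
qed

lemma g0_zero:
  fixes D :: "'a::euclidean_space set" and \<psi> :: "'s \<Rightarrow> 'a \<Rightarrow> real"
  assumes rb: "riesz_basis_H10 D \<psi>"
  shows "AE x in lebesgue. x \<in> D \<longrightarrow> wgrad D (\<lambda>_. 0::real) x = 0"
proof -
  define g0 where "g0 = wgrad D (\<lambda>_. 0::real)"
  from rb obtain c1 c2 where c: "0 < c2" "\<And>c. finite {l. c l \<noteq> 0} \<Longrightarrow> Vdist2 D (\<lambda>_. 0) \<psi> c \<le> c2 * (\<Sum>l\<in>{l. c l \<noteq> 0}. (c l)\<^sup>2)"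
    unfolding riesz_basis_H10_def by blast
  have sq: "sq_int D g0" using wg0[of D] unfolding g0_def is_weak_grad_def by auto
  have "Vdist2 D (\<lambda>_. 0) \<psi> (\<lambda>_. 0) \<le> 0" using c(2)[of "\<lambda>_. 0"] by simp
  moreover have "Vdist2 D (\<lambda>_. 0) \<psi> (\<lambda>_. 0) = integral\<^sup>L lebesgue (\<lambda>x. indicator D x * (norm (g0 x))\<^sup>2)"
    unfolding Vdist2_def set_lebesgue_integral_def g0_def by simp
  ultimately have le: "integral\<^sup>L lebesgue (\<lambda>x. indicator D x * (norm (g0 x))\<^sup>2) \<le> 0" by simp
  have int: "integrable lebesgue (\<lambda>x. indicator D x * (norm (g0 x))\<^sup>2)" by (rule sqI(2)[OF sq])
  have "integral\<^sup>L lebesgue (\<lambda>x. indicator D x * (norm (g0 x))\<^sup>2) = 0"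
  proof -
    have "0 \<le> integral\<^sup>L lebesgue (\<lambda>x. indicator D x * (norm (g0 x))\<^sup>2)"
      by (rule integral_nonneg_AE) auto
    then show ?thesis using le by linarith
  qed
  then have "AE x in lebesgue. indicator D x * (norm (g0 x))\<^sup>2 = 0"
    using integral_nonneg_eq_0_iff_AE[OF int] by auto
  then show ?thesis unfolding g0_def[symmetric]
    by eventually_elim (auto split: split_indicator)
qed

lemma vd:
  fixes D :: "'a::euclidean_space set" and \<psi> :: "'s \<Rightarrow> 'a \<Rightarrow> real"
  assumes g0: "AE x in lebesgue. x \<in> D \<longrightarrow> wgrad D (\<lambda>_. 0::real) x = 0"
    and sq: "\<And>l. sq_int D (wgrad D (\<psi> l))"
  shows "integral\<^sup>L lebesgue (\<lambda>x. indicator D x * (norm (\<Sum>l\<in>{l. c l \<noteq> 0}. c l *\<^sub>R wgrad D (\<psi> l) x))\<^sup>2)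
     = Vdist2 D (\<lambda>_. 0) \<psi> c"
proof -
  have sq0: "sq_int D (wgrad D (\<lambda>_. 0::real))" using wg0[of D] unfolding is_weak_grad_def by auto
  have sqz: "sq_int D (\<lambda>_. 0::'a)"
    unfolding sq_int_def set_borel_measurable_def set_integrable_def by simp
  have "Vdist2 D (\<lambda>_. 0) \<psi> c = integral\<^sup>L lebesgue (\<lambda>x. indicator D x * (norm (wgrad D (\<lambda>_. 0::real) x - (\<Sum>l\<in>{l. c l \<noteq> 0}. c l *\<^sub>R wgrad D (\<psi> l) x)))\<^sup>2)"
    unfolding Vdist2_def set_lebesgue_integral_def by simp
  also have "\<dots> = integral\<^sup>L lebesgue (\<lambda>x. indicator D x * (norm ((\<lambda>_. 0::'a) x - (\<Sum>l\<in>{l. c l \<noteq> 0}. c l *\<^sub>R wgrad D (\<psi> l) x)))\<^sup>2)"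
    by (rule integral_cong_AE[OF ind_norm_meas[OF sq0 sq] ind_norm_meas[OF sqz sq]])
       (use g0 in \<open>eventually_elim, auto split: split_indicator\<close>)
  finally show ?thesis by simp
qed

lemma sum3_swap: "(\<Sum>p\<in>P. \<Sum>q\<in>Q. a p * (\<Sum>j\<in>J. X j p q) * (b q::real)) = (\<Sum>j\<in>J. \<Sum>p\<in>P. \<Sum>q\<in>Q. (a p * b q) * X j p q)"
proof -
  have "(\<Sum>p\<in>P. \<Sum>q\<in>Q. a p * (\<Sum>j\<in>J. X j p q) * b q) = (\<Sum>p\<in>P. \<Sum>q\<in>Q. \<Sum>j\<in>J. (a p * b q) * X j p q)"
    by (simp add: sum_distrib_left sum_distrib_right ac_simps)
  also have "\<dots> = (\<Sum>p\<in>P. \<Sum>j\<in>J. \<Sum>q\<in>Q. (a p * b q) * X j p q)"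
    by (rule sum.cong[OF refl]) (rule sum.swap)
  also have "\<dots> = (\<Sum>j\<in>J. \<Sum>p\<in>P. \<Sum>q\<in>Q. (a p * b q) * X j p q)"
    by (rule sum.swap)
  finally show ?thesis .
qed

lemma norm_sum_sq_int:
  fixes G :: "'p \<Rightarrow> 'a::euclidean_space \<Rightarrow> 'a"
  assumes P: "finite P" and sq: "\<And>p. p \<in> P \<Longrightarrow> sq_int D (G p)"
  shows "integrable lebesgue (\<lambda>x. indicator D x * (norm (\<Sum>p\<in>P. a p *\<^sub>R G p x))\<^sup>2)"
proof -
  have eq: "(\<lambda>x. indicator D x * (norm (\<Sum>p\<in>P. a p *\<^sub>R G p x))\<^sup>2) =
     (\<lambda>x. \<Sum>p\<in>P. \<Sum>q\<in>P. (a p * a q) * (indicator D x * (G p x \<bullet> G q x)))"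
    by (simp add: power2_norm_eq_inner inner_sum_left inner_sum_right sum_distrib_left ac_simps inner_commute)
  show ?thesis unfolding eq
    by (rule int_dsum(1)[OF P P]) (intro inner_int sq; assumption)
qed

theorem mainTheorem2:
  fixes D :: "'a::euclidean_space set"
    and \<psi> :: "'s \<Rightarrow> 'a \<Rightarrow> real"
    and Lam :: "'l set" and lev :: "'l \<Rightarrow> nat" and \<xi> :: "'l \<Rightarrow> 'a \<Rightarrow> real"
    and enum :: "nat \<Rightarrow> 'l" and \<alpha> :: real
  assumes D: "open D" "connected D" "bounded D" "D \<noteq> {}"
    and basis: "riesz_basis_H10 D \<psi>"
    and ml: "multilevel D Lam lev \<xi> enum"
    and alpha: "\<alpha> > 0"
  defines "\<theta> \<equiv> (\<lambda>j x. 2 powr (- \<alpha> * real (lev (enum j))) * \<xi> (enum j) x)"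
  shows "\<exists>C>0. \<forall>M::nat. M \<ge> 1 \<longrightarrow>
           tail_norm (\<lambda>j. Amat D \<psi> (\<theta> j)) M \<le> ereal (C * real M powr (- \<alpha> / real DIM('a)))"
proof -
  define m where "m = real DIM('a)"
  have m: "m > 0" unfolding m_def by simp
  define A where "A = (\<lambda>j. Amat D \<psi> (\<theta> j))"
  define g where "g l = wgrad D (\<psi> l)" for l
  have \<xi>props: "\<And>\<mu>. \<mu> \<in> Lam \<Longrightarrow> \<xi> \<mu> \<in> borel_measurable lebesgue \<and> closure {x. \<xi> \<mu> x \<noteq> 0} \<subseteq> D
      \<and> esssup (restrict_space lebesgue D) (\<lambda>x. ereal \<bar>\<xi> \<mu> x\<bar>) = 1"
    using ml unfolding multilevel_def by blast
  obtain Cc where Cc: "\<And>l. finite {\<mu>\<in>Lam. lev \<mu> \<le> l} \<and>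
      real (card {\<mu>\<in>Lam. lev \<mu> \<le> l}) \<le> Cc * 2 powr (m * real l)"
    using ml unfolding multilevel_def m_def by blast
  obtain K where K: "\<And>x l. x \<in> D \<Longrightarrow> finite {\<mu>\<in>Lam. lev \<mu> = l \<and> \<xi> \<mu> x \<noteq> 0} \<and>
      card {\<mu>\<in>Lam. lev \<mu> = l \<and> \<xi> \<mu> x \<noteq> 0} \<le> K"
    using ml unfolding multilevel_def by blast
  have bij: "bij_betw enum UNIV Lam" and mono: "mono (lev \<circ> enum)"
    using ml unfolding multilevel_def by blast+
  have inj: "inj enum" using bij by (rule bij_betw_imp_inj_on)
  have Lam: "enum j \<in> Lam" for j using bij bij_betwE by blast
  obtain c2 where c2: "0 < c2" "\<And>c. finite {l. c l \<noteq> 0} \<Longrightarrow> Vdist2 D (\<lambda>_. 0) \<psi> c \<le> c2 * (\<Sum>l\<in>{l. c l \<noteq> 0}. (c l)\<^sup>2)"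
    using basis unfolding riesz_basis_H10_def by blast
  have H10: "\<psi> l \<in> H10 D" for l using basis unfolding riesz_basis_H10_def by blast
  have sqg: "sq_int D (g l)" for l using H10_wg[OF H10[of l]] unfolding g_def is_weak_grad_def by auto
  have g0: "AE x in lebesgue. x \<in> D \<longrightarrow> wgrad D (\<lambda>_. 0::real) x = 0" by (rule g0_zero[OF basis])
  have Dmeas: "D \<in> sets lebesgue" using D lmeasurable_open fmeasurableD by blast
  have \<xi>b: "AE x in lebesgue. x \<in> D \<longrightarrow> \<bar>\<xi> \<mu> x\<bar> \<le> 1" if "\<mu> \<in> Lam" for \<mu>
  proof -
    have "AE x in restrict_space lebesgue D. ereal \<bar>\<xi> \<mu> x\<bar> \<le> esssup (restrict_space lebesgue D) (\<lambda>x. ereal \<bar>\<xi> \<mu> x\<bar>)"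
      by (rule esssup_AE)
    then have "AE x in restrict_space lebesgue D. \<bar>\<xi> \<mu> x\<bar> \<le> 1"
      using \<xi>props[OF that] by simp
    then show ?thesis using Dmeas by (subst (asm) AE_restrict_space_iff) auto
  qed
  have \<theta>meas: "\<theta> j \<in> borel_measurable lebesgue" for j
  proof -
    have "\<xi> (enum j) \<in> borel_measurable lebesgue" using \<xi>props[OF Lam[of j]] by blast
    then show ?thesis unfolding \<theta>_def by (intro borel_measurable_times borel_measurable_const)
  qed
  have pw1: "2 powr (- \<alpha> * real n) \<le> 1" for n
  proof -
    have "2 powr (- \<alpha> * real n) \<le> 2 powr 0" by (rule powr_mono) (use alpha in auto)
    then show ?thesis by simp
  qed
  have \<theta>b: "AE x in lebesgue. x \<in> D \<longrightarrow> \<bar>\<theta> j x\<bar> \<le> 1" for j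
    using \<xi>b[OF Lam[of j]]
  proof eventually_elim
    case (elim x)
    show ?case
    proof
      assume "x \<in> D"
      then have "\<bar>\<xi> (enum j) x\<bar> \<le> 1" using elim by auto
      then show "\<bar>\<theta> j x\<bar> \<le> 1" unfolding \<theta>_def using pw1[of "lev (enum j)"]
        by (auto simp: abs_mult intro: mult_le_one)
    qed
  qed
  define r where "r = 2 powr (- \<alpha>)"
  have "2 powr (- \<alpha>) < 2 powr 0" by (rule powr_less_mono) (use alpha in auto)
  then have r: "0 < r" "r < 1" unfolding r_def by auto
  have Ccpos: "0 < Cc"
  proof -
    have "enum 0 \<in> {\<mu>\<in>Lam. lev \<mu> \<le> lev (enum 0)}" using Lam by auto
    then have "1 \<le> card {\<mu>\<in>Lam. lev \<mu> \<le> lev (enum 0)}"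
    proof -
      have "{\<mu>\<in>Lam. lev \<mu> \<le> lev (enum 0)} \<noteq> {}" using Lam by auto
      then show ?thesis using Cc[of "lev (enum 0)"] by (simp add: Suc_leI card_gt_0_iff)
    qed
    then have "1 \<le> Cc * 2 powr (m * real (lev (enum 0)))" using Cc[of "lev (enum 0)"] by linarith
    moreover have "0 < 2 powr (m * real (lev (enum 0)))" by simp
    ultimately show ?thesis using zero_less_mult_pos2[of Cc "2 powr (m * real (lev (enum 0)))"] by linarith
  qed
  define N where "N w x = (\<Sum>p\<in>{p. w p \<noteq> 0}. \<Sum>p'\<in>{p. w p \<noteq> 0}. if snd p = snd p' then
      w p * w p' * (g (fst p) x \<bullet> g (fst p') x) else 0)" for w :: "'s \<times> (nat \<Rightarrow> nat) \<Rightarrow> real" and x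
  have N_nonneg: "fin_l2_unit w \<Longrightarrow> 0 \<le> N w x" for w x
    unfolding N_def fin_l2_unit_def by (intro group_sq_nonneg) auto
  have N_int: "fin_l2_unit w \<Longrightarrow> integrable lebesgue (\<lambda>x. indicator D x * N w x)" for w
  proof -
    assume fw: "fin_l2_unit w"
    have P: "finite {p. w p \<noteq> 0}" using fw unfolding fin_l2_unit_def by auto
    have eq: "(\<lambda>x. indicator D x * N w x) = (\<lambda>x. \<Sum>p\<in>{p. w p \<noteq> 0}. \<Sum>p'\<in>{p. w p \<noteq> 0}.
       (if snd p = snd p' then w p * w p' else 0) * (indicator D x * (g (fst p) x \<bullet> g (fst p') x)))"
      unfolding N_def by (auto simp: sum_distrib_left intro!: sum.cong)
    show ?thesis unfolding eq
      by (rule int_dsum(1)[OF P P]) (intro inner_int sqg)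
  qed
  have N_bound: "fin_l2_unit w \<Longrightarrow> integral\<^sup>L lebesgue (\<lambda>x. indicator D x * N w x) \<le> c2" for w
  proof -
    assume fw: "fin_l2_unit w"
    define P where "P = {p. w p \<noteq> 0}"
    have P: "finite P" using fw unfolding fin_l2_unit_def P_def by auto
    have w1: "(\<Sum>p\<in>P. (w p)\<^sup>2) \<le> 1" using fw unfolding fin_l2_unit_def P_def by auto
    define Pn where "Pn \<nu> = {p\<in>P. snd p = \<nu>}" for \<nu>
    have finPn: "finite (Pn \<nu>)" for \<nu> using P unfolding Pn_def by auto
    have eq: "(\<lambda>x. indicator D x * N w x) = (\<lambda>x. \<Sum>\<nu>\<in>snd ` P. indicator D x * (norm (\<Sum>p\<in>Pn \<nu>. w p *\<^sub>R g (fst p) x))\<^sup>2)"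
    proof
      fix x
      show "indicator D x * N w x = (\<Sum>\<nu>\<in>snd ` P. indicator D x * (norm (\<Sum>p\<in>Pn \<nu>. w p *\<^sub>R g (fst p) x))\<^sup>2)"
        unfolding N_def P_def[symmetric] group_sq[OF P, of snd w "\<lambda>p. g (fst p) x"] Pn_def
        by (simp add: sum_distrib_left)
    qed
    have each: "integral\<^sup>L lebesgue (\<lambda>x. indicator D x * (norm (\<Sum>p\<in>Pn \<nu>. w p *\<^sub>R g (fst p) x))\<^sup>2)
        \<le> c2 * (\<Sum>p\<in>Pn \<nu>. (w p)\<^sup>2)" for \<nu>
    proof -
      define c where "c l = w (l, \<nu>)" for l
      have img: "Pn \<nu> = (\<lambda>l. (l, \<nu>)) ` {l. c l \<noteq> 0}"
        unfolding Pn_def P_def c_def by auto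
      have inj: "inj_on (\<lambda>l. (l, \<nu>)) {l. c l \<noteq> 0}" by (auto simp: inj_on_def)
      have finc: "finite {l. c l \<noteq> 0}"
        using finPn[of \<nu>] unfolding img by (rule finite_imageD) (rule inj)
      have s1: "(\<Sum>p\<in>Pn \<nu>. w p *\<^sub>R g (fst p) x) = (\<Sum>l\<in>{l. c l \<noteq> 0}. c l *\<^sub>R wgrad D (\<psi> l) x)" for x
        unfolding img sum.reindex[OF inj] by (simp add: c_def g_def)
      have s2: "(\<Sum>p\<in>Pn \<nu>. (w p)\<^sup>2) = (\<Sum>l\<in>{l. c l \<noteq> 0}. (c l)\<^sup>2)"
        unfolding img sum.reindex[OF inj] by (simp add: c_def)
      show ?thesis unfolding s1 s2 vd[OF g0 sqg[unfolded g_def]] by (rule c2(2)[OF finc])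
    qed
    have "integral\<^sup>L lebesgue (\<lambda>x. indicator D x * N w x) =
        (\<Sum>\<nu>\<in>snd ` P. integral\<^sup>L lebesgue (\<lambda>x. indicator D x * (norm (\<Sum>p\<in>Pn \<nu>. w p *\<^sub>R g (fst p) x))\<^sup>2))"
      unfolding eq by (rule Bochner_Integration.integral_sum) (intro norm_sum_sq_int finPn sqg)
    also have "\<dots> \<le> (\<Sum>\<nu>\<in>snd ` P. c2 * (\<Sum>p\<in>Pn \<nu>. (w p)\<^sup>2))"
      by (rule sum_mono) (rule each)
    also have "\<dots> = c2 * (\<Sum>p\<in>P. (w p)\<^sup>2)"
      unfolding sum_distrib_left[symmetric] Pn_def using sum.image_gen[OF P, of "\<lambda>p. (w p)\<^sup>2" snd] by simp
    also have "\<dots> \<le> c2" using w1 c2(1) by (simp add: mult_le_cancel_left1)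
    finally show ?thesis .
  qed
  define Cf where "Cf = c2 * (real K + 1) * Cc powr (\<alpha> / m) / (1 - r)"
  show ?thesis
  proof (intro exI[of _ Cf] conjI allI impI)
    show "0 < Cf" unfolding Cf_def using c2 r Ccpos by (intro divide_pos_pos mult_pos_pos) auto
    fix M :: nat assume M: "M \<ge> 1"
    define L where "L = lev (enum M)"
    define \<rho>0 where "\<rho>0 = real K * r ^ L / (1 - r)"
    have \<rho>0: "0 \<le> \<rho>0" unfolding \<rho>0_def using r by auto
    have \<rho>0_bound: "c2 * \<rho>0 \<le> Cf * real M powr (- \<alpha> / m)"
    proof -
      have "real M + 1 \<le> real (card {\<mu>\<in>Lam. lev \<mu> \<le> L})"
        unfolding L_def using Cc by (intro M_L inj mono Lam) auto
      also have "\<dots> \<le> Cc * 2 powr (m * real L)" using Cc by blast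
      finally have MLb: "real M / Cc \<le> 2 powr (m * real L)" using Ccpos by (simp add: field_simps)
      have Mpos: "0 < real M / Cc" using M Ccpos by simp
      have "r ^ L = 2 powr (- \<alpha> * real L)"
      proof -
        have "r ^ L = r powr (real L)" using r by (simp add: powr_realpow)
        also have "\<dots> = 2 powr (- \<alpha> * real L)" unfolding r_def by (simp add: powr_powr)
        finally show ?thesis .
      qed
      also have "\<dots> = (2 powr (m * real L)) powr (- \<alpha> / m)"
        using m by (simp add: powr_powr mult.commute)
      also have "\<dots> \<le> (real M / Cc) powr (- \<alpha> / m)"
        by (rule powr_mono2') (use alpha m Mpos MLb in auto)
      also have "\<dots> = real M powr (- \<alpha> / m) / Cc powr (- \<alpha> / m)"
        using Ccpos by (simp add: powr_divide)
      also have "\<dots> = Cc powr (\<alpha> / m) * real M powr (- \<alpha> / m)"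
      proof -
        have e: "Cc powr (- \<alpha> / m) = inverse (Cc powr (\<alpha> / m))" using powr_minus[of Cc "\<alpha> / m"] by simp
        show ?thesis unfolding e by (simp add: divide_inverse)
      qed
      finally have rL: "r ^ L \<le> Cc powr (\<alpha> / m) * real M powr (- \<alpha> / m)" .
      have "c2 * \<rho>0 = c2 * real K * r ^ L / (1 - r)" unfolding \<rho>0_def by simp
      also have "\<dots> \<le> c2 * (real K + 1) * (Cc powr (\<alpha> / m) * real M powr (- \<alpha> / m)) / (1 - r)"
        using r c2 rL by (intro divide_right_mono mult_mono) auto
      also have "\<dots> = Cf * real M powr (- \<alpha> / m)" unfolding Cf_def by simp
      finally show ?thesis .
    qed
    have core: "\<bar>\<Sum>p\<in>{p. w p \<noteq> 0}. \<Sum>q\<in>{q. v q \<noteq> 0}. w p * tail_entry A M p q * v q\<bar> \<le> c2 * \<rho>0"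
      if fv: "fin_l2_unit v" and fw: "fin_l2_unit w" for v w
    proof -
      define Pw where "Pw = {p. w p \<noteq> 0}"
      define Pv where "Pv = {q. v q \<noteq> 0}"
      have Pw: "finite Pw" "Pw \<subseteq> UNIV \<times> Fidx" using fw unfolding fin_l2_unit_def Pw_def by auto
      have Pv: "finite Pv" "Pv \<subseteq> UNIV \<times> Fidx" using fv unfolding fin_l2_unit_def Pv_def by auto
      have sndF: "snd p \<in> Fidx" if "p \<in> Pw \<union> Pv" for p using that Pw(2) Pv(2) by auto
      define J where "J = (\<Union>p\<in>Pw \<union> Pv. {j. snd p j \<noteq> 0})"
      have finJ: "finite J" unfolding J_def using Pw(1) Pv(1) sndF
        by (intro finite_UN_I) (auto simp: Fidx_def)
      define JM where "JM = {j\<in>J. M \<le> j}"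
      have finJM: "finite JM" unfolding JM_def using finJ by simp
      have te: "tail_entry A M p q = (\<Sum>j\<in>JM. A j (fst p) (fst q) * Mmat j (snd p) (snd q))"
        if pq: "p \<in> Pw" "q \<in> Pv" for p q
      proof -
        have "tail_entry A M p q = (\<Sum>j\<in>J. if M \<le> j then A j (fst p) (fst q) * Mmat j (snd p) (snd q) else 0)"
          unfolding tail_entry_def
        proof (rule suminf_finite[OF finJ])
          fix j assume "j \<notin> J"
          then have "snd p j = 0" "snd q j = 0" using pq unfolding J_def by auto
          then have "Mmat j (snd p) (snd q) = 0" using sndF pq by (intro tensLLj(2)) auto
          then show "(if M \<le> j then A j (fst p) (fst q) * Mmat j (snd p) (snd q) else 0) = 0" by simp
        qed
        also have "\<dots> = (\<Sum>j\<in>JM. A j (fst p) (fst q) * Mmat j (snd p) (snd q))"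
          unfolding JM_def by (simp add: sum.inter_filter[OF finJ])
        finally show ?thesis .
      qed
      define F where "F j p q x = indicator D x * (\<theta> j x * (g (fst q) x \<bullet> g (fst p) x))" for j and p q :: "'s \<times> (nat \<Rightarrow> nat)" and x
      have Aeq: "A j l l' = integral\<^sup>L lebesgue (\<lambda>x. indicator D x * (\<theta> j x * (g l' x \<bullet> g l x)))" for j l l'
        unfolding A_def Amat_def set_lebesgue_integral_def g_def by simp
      have intF: "integrable lebesgue (F j p q)" for j p q
        unfolding F_def by (rule inner_int_h[OF sqg sqg \<theta>meas \<theta>b])
      define c where "c j p q = w p * v q * Mmat j (snd p) (snd q)" for j p q
      have iL: "integrable lebesgue (\<lambda>x. \<Sum>j\<in>JM. \<Sum>p\<in>Pw. \<Sum>q\<in>Pv. c j p q * F j p q x)"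
        by (intro Bochner_Integration.integrable_sum int_dsum(1)[OF Pw(1) Pv(1)] intF)
      have Seq: "(\<Sum>p\<in>Pw. \<Sum>q\<in>Pv. w p * tail_entry A M p q * v q) =
          integral\<^sup>L lebesgue (\<lambda>x. \<Sum>j\<in>JM. \<Sum>p\<in>Pw. \<Sum>q\<in>Pv. c j p q * F j p q x)"
      proof -
        have "(\<Sum>p\<in>Pw. \<Sum>q\<in>Pv. w p * tail_entry A M p q * v q) =
            (\<Sum>p\<in>Pw. \<Sum>q\<in>Pv. w p * (\<Sum>j\<in>JM. A j (fst p) (fst q) * Mmat j (snd p) (snd q)) * v q)"
          using te by (intro sum.cong refl) auto
        also have "\<dots> = (\<Sum>j\<in>JM. \<Sum>p\<in>Pw. \<Sum>q\<in>Pv. (w p * v q) * (A j (fst p) (fst q) * Mmat j (snd p) (snd q)))"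
          by (rule sum3_swap)
        also have "\<dots> = (\<Sum>j\<in>JM. \<Sum>p\<in>Pw. \<Sum>q\<in>Pv. c j p q * integral\<^sup>L lebesgue (F j p q))"
          unfolding c_def F_def Aeq by (simp add: ac_simps)
        also have "\<dots> = (\<Sum>j\<in>JM. integral\<^sup>L lebesgue (\<lambda>x. \<Sum>p\<in>Pw. \<Sum>q\<in>Pv. c j p q * F j p q x))"
          using int_dsum(2)[OF Pw(1) Pv(1)] intF by simp
        also have "\<dots> = integral\<^sup>L lebesgue (\<lambda>x. \<Sum>j\<in>JM. \<Sum>p\<in>Pw. \<Sum>q\<in>Pv. c j p q * F j p q x)"
          by (rule Bochner_Integration.integral_sum[symmetric]) (intro int_dsum(1)[OF Pw(1) Pv(1)] intF)
        finally show ?thesis .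
      qed
      define E where "E j x = (\<Sum>p\<in>Pw. \<Sum>q\<in>Pv. w p * v q * (g (fst p) x \<bullet> g (fst q) x) * Mmat j (snd p) (snd q))" for j x
      have pt: "(\<Sum>j\<in>JM. \<Sum>p\<in>Pw. \<Sum>q\<in>Pv. c j p q * F j p q x) = indicator D x * (\<Sum>j\<in>JM. \<theta> j x * E j x)" for x
        unfolding c_def F_def E_def by (simp add: sum_distrib_left ac_simps inner_commute)
      have AEb: "AE x in lebesgue. \<forall>j\<in>JM. x \<in> D \<longrightarrow> \<bar>\<xi> (enum j) x\<bar> \<le> 1"
        using finJM by (rule eventually_ball_finite) (use \<xi>b[OF Lam] in blast)
      have bnd: "AE x in lebesgue. \<bar>indicator D x * (\<Sum>j\<in>JM. \<theta> j x * E j x)\<bar> \<le>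
          indicator D x * (\<rho>0 * ((N w x + N v x) / 2))"
        using AEb
      proof eventually_elim
        case (elim x)
        show ?case
        proof (cases "x \<in> D")
          case False then show ?thesis by simp
        next
          case True
          have xb: "\<And>j. j \<in> JM \<Longrightarrow> \<bar>\<xi> (enum j) x\<bar> \<le> 1" using elim True by auto
          have Eb: "\<bar>E j x\<bar> \<le> (N w x + N v x) / 2" for j
            unfolding E_def N_def Pw_def[symmetric] Pv_def[symmetric]
            by (rule Y_amgm[where g="\<lambda>p. g (fst p) x" and h="\<lambda>q. g (fst q) x"])
               (use Pw Pv in auto)
          have Nn: "0 \<le> N w x + N v x" using N_nonneg[OF fw] N_nonneg[OF fv] by (simp add: add_nonneg_nonneg)
          have "\<bar>\<Sum>j\<in>JM. \<theta> j x * E j x\<bar> \<le> (\<Sum>j\<in>JM. \<bar>\<theta> j x\<bar> * ((N w x + N v x) / 2))"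
            by (rule order_trans[OF sum_abs], rule sum_mono) (simp only: abs_mult, rule mult_left_mono[OF Eb abs_ge_zero])
          also have "\<dots> = (\<Sum>j\<in>JM. \<bar>\<theta> j x\<bar>) * ((N w x + N v x) / 2)" by (simp add: sum_distrib_right)
          also have "\<dots> \<le> \<rho>0 * ((N w x + N v x) / 2)"
          proof (rule mult_right_mono)
            show "(\<Sum>j\<in>JM. \<bar>\<theta> j x\<bar>) \<le> \<rho>0"
              unfolding \<theta>_def \<rho>0_def r_def L_def
              by (rule rho_bound[where enum=enum and lev=lev and Lam=Lam and \<xi>=\<xi> and x=x and K=K and JM=JM and M=M and \<alpha>=\<alpha>])
                 (use inj mono Lam K[OF True] finJM alpha xb in \<open>auto simp: JM_def\<close>)
          qed (use Nn in simp)
          finally show ?thesis using True by simp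
        qed
      qed
      have iR: "integrable lebesgue (\<lambda>x. indicator D x * (\<rho>0 * ((N w x + N v x) / 2)))"
      proof -
        have eq: "(\<lambda>x. indicator D x * (\<rho>0 * ((N w x + N v x) / 2))) =
            (\<lambda>x. (\<rho>0 / 2) * (indicator D x * N w x) + (\<rho>0 / 2) * (indicator D x * N v x))"
          by (simp add: fun_eq_iff field_simps)
        show ?thesis unfolding eq using N_int[OF fw] N_int[OF fv] by auto
      qed
      have "\<bar>\<Sum>p\<in>Pw. \<Sum>q\<in>Pv. w p * tail_entry A M p q * v q\<bar> =
          \<bar>integral\<^sup>L lebesgue (\<lambda>x. indicator D x * (\<Sum>j\<in>JM. \<theta> j x * E j x))\<bar>"
        unfolding Seq pt ..
      also have "\<dots> \<le> integral\<^sup>L lebesgue (\<lambda>x. \<bar>indicator D x * (\<Sum>j\<in>JM. \<theta> j x * E j x)\<bar>)"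
        by (rule integral_abs_bound)
      also have "\<dots> \<le> integral\<^sup>L lebesgue (\<lambda>x. indicator D x * (\<rho>0 * ((N w x + N v x) / 2)))"
      proof (rule integral_mono_AE[OF _ iR bnd])
        show "integrable lebesgue (\<lambda>x. \<bar>indicator D x * (\<Sum>j\<in>JM. \<theta> j x * E j x)\<bar>)"
          using iL unfolding pt by (rule integrable_abs)
      qed
      also have "\<dots> = (\<rho>0 / 2) * (integral\<^sup>L lebesgue (\<lambda>x. indicator D x * N w x) + integral\<^sup>L lebesgue (\<lambda>x. indicator D x * N v x))"
      proof -
        have eq: "(\<lambda>x. indicator D x * (\<rho>0 * ((N w x + N v x) / 2))) =
            (\<lambda>x. (\<rho>0 / 2) * (indicator D x * N w x) + (\<rho>0 / 2) * (indicator D x * N v x))"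
          by (simp add: fun_eq_iff field_simps)
        show ?thesis unfolding eq using N_int[OF fw] N_int[OF fv] by (simp add: lin_add distrib_left)
      qed
      also have "\<dots> \<le> (\<rho>0 / 2) * (c2 + c2)"
        using N_bound[OF fw] N_bound[OF fv] \<rho>0 by (intro mult_left_mono add_mono) auto
      also have "\<dots> = c2 * \<rho>0" by simp
      finally show ?thesis unfolding Pw_def Pv_def .
    qed
    show "tail_norm (\<lambda>j. Amat D \<psi> (\<theta> j)) M \<le> ereal (Cf * real M powr (- \<alpha> / real DIM('a)))"
      unfolding tail_norm_def A_def[symmetric] m_def[symmetric]
    proof (rule SUP_least, clarify)
      fix v w :: "'s \<times> (nat \<Rightarrow> nat) \<Rightarrow> real"
      assume vw: "fin_l2_unit v" "fin_l2_unit w"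
      have "\<bar>\<Sum>p\<in>{p. w p \<noteq> 0}. \<Sum>q\<in>{q. v q \<noteq> 0}. w p * tail_entry A M p q * v q\<bar> \<le> Cf * real M powr (- \<alpha> / m)"
        using core[OF vw] \<rho>0_bound by linarith
      then show "ereal \<bar>\<Sum>p\<in>{p. w p \<noteq> 0}. \<Sum>q\<in>{q. v q \<noteq> 0}. w p * tail_entry A M p q * v q\<bar> \<le> ereal (Cf * real M powr (- \<alpha> / m))"
        by simp
    qed
  qed
qed

end
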